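(* Let $(N_0,v)$ be the RS-game corresponding to an RS-situation $(N_0,c,w,P)$, and let $\xi(v)$ be defined by $\xi_0(v)=n\beta$ and $\xi_i(v)=v(\{0,i\})-\beta$ for $i\in N$, where $\beta=\min_{S\subseteq N,\,S\neq\emptyset}\frac{v(S_0)-v(S)}{s}$. Then $\xi(v)\in Core(N_0,v)$ and $\xi_0(v)>0$.
   Context: Let $c\in\mathbb{R}$. An RS-problem is a triple $(c,w,p)$ where $w:\mathbb{R}_+\to(c,+\infty)$ is decreasing (non-increasing) and continuous, and $p:\mathbb{R}_+\to\mathbb{R}$ is decreasing (non-increasing) and continuous, satisfies $p(0)>w(0)$, and there exists $q>0$ with $p(q)=c$. An RS-situation is a tuple $(N_0,c,w,P)$ where $N=\{1,\dots,n\}$ is the set of retailers, $0$ denotes the supplier, $N_0=N\cup\{0\}$, $P=(p_1,\dots,p_n)$, and $(c,w,p_i)$ is an RS-problem for each $i\in N$. For $S\subseteq N$ write $S_0=S\cup\{0\}$ and $s=|S|$. For $q\ge0$ and $\omega\in\mathbb{R}$, $\Pi_i^{ret}(q;\omega)=(p_i(q)-\omega)q$. For nonempty $S\subseteq N$, $(q_i^S)_{i\in S}$ is a fixed optimal solution of: maximize $\sum_{i\in S}(p_i(q_i)-w(q_S))q_i$ over $q\in\mathbb{R}_+^{S}$ subject to $p_i(q_i)\ge w(q_S)$ for all $i\in S$, where $q_S=\sum_{i\in S}q_i$; $q_S^S=\sum_{i\in S}q_i^S$. For $i\in N$, $q_i^c$ is a fixed optimal solution of: maximize $(p_i(q)-c)q$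 over $q\ge0$ subject to $p_i(q)\ge c$. The corresponding RS-game $(N_0,v)$ is the TU game on $N_0$ with $v(\emptyset)=0$ and, for all $S\subseteq N$, $v(S)=\sum_{i\in S}\Pi_i^{ret}(q_i^S;w(q_S^S))$ and $v(S_0)=\sum_{i\in S}\Pi_i^{ret}(q_i^c;c)$. The core is $Core(N_0,v)=\{x\in\mathbb{R}^{N_0}: \sum_{i\in N_0}x_i=v(N_0),\ \sum_{i\in T}x_i\ge v(T)\text{ for all }T\subset N_0\}$. *)

theory Defs
  imports Complex_Main
begin

text \<open>Players are natural numbers: 0 is the supplier, retailers are 1..n.
  Functions on R+ are real functions; only their values on [0,\<infinity>) matter.\<close>

definition nonincr_on_nonneg :: "(real \<Rightarrow> real) \<Rightarrow> bool" where
  "nonincr_on_nonneg f \<longleftrightarrow> (\<forall>x y. 0 \<le> x \<longrightarrow> x \<le> y \<longrightarrow> f y \<le> f x)"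

definition rs_problem :: "real \<Rightarrow> (real \<Rightarrow> real) \<Rightarrow> (real \<Rightarrow> real) \<Rightarrow> bool" where
  "rs_problem c w p \<longleftrightarrow>
     (\<forall>q\<ge>0. w q > c) \<and> nonincr_on_nonneg w \<and> continuous_on {0..} w \<and>
     nonincr_on_nonneg p \<and> continuous_on {0..} p \<and> p 0 > w 0 \<and>
     (\<exists>q>0. p q = c)"

definition rs_situation :: "nat \<Rightarrow> real \<Rightarrow> (real \<Rightarrow> real) \<Rightarrow> (nat \<Rightarrow> real \<Rightarrow> real) \<Rightarrow> bool" where
  "rs_situation n c w P \<longleftrightarrow> (\<forall>i\<in>{1..n}. rs_problem c w (P i))"

definition ret_profit :: "(nat \<Rightarrow> real \<Rightarrow> real) \<Rightarrow> nat \<Rightarrow> real \<Rightarrow> real \<Rightarrow> real" where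
  "ret_profit P i q \<omega> = (P i q - \<omega>) * q"

definition coal_feasible :: "(real \<Rightarrow> real) \<Rightarrow> (nat \<Rightarrow> real \<Rightarrow> real) \<Rightarrow> nat set \<Rightarrow> (nat \<Rightarrow> real) \<Rightarrow> bool" where
  "coal_feasible w P S q \<longleftrightarrow> (\<forall>i\<in>S. 0 \<le> q i \<and> P i (q i) \<ge> w (\<Sum>j\<in>S. q j))"

definition coal_obj :: "(real \<Rightarrow> real) \<Rightarrow> (nat \<Rightarrow> real \<Rightarrow> real) \<Rightarrow> nat set \<Rightarrow> (nat \<Rightarrow> real) \<Rightarrow> real" where
  "coal_obj w P S q = (\<Sum>i\<in>S. (P i (q i) - w (\<Sum>j\<in>S. q j)) * q i)"

definition coal_optimal :: "(real \<Rightarrow> real) \<Rightarrow> (nat \<Rightarrow> real \<Rightarrow> real) \<Rightarrow> nat set \<Rightarrow> (nat \<Rightarrow> real) \<Rightarrow> bool" where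
  "coal_optimal w P S q \<longleftrightarrow> coal_feasible w P S q \<and>
     (\<forall>q'. coal_feasible w P S q' \<longrightarrow> coal_obj w P S q' \<le> coal_obj w P S q)"

definition single_optimal :: "real \<Rightarrow> (real \<Rightarrow> real) \<Rightarrow> real \<Rightarrow> bool" where
  "single_optimal c p x \<longleftrightarrow> 0 \<le> x \<and> p x \<ge> c \<and>
     (\<forall>y. 0 \<le> y \<longrightarrow> p y \<ge> c \<longrightarrow> (p y - c) * y \<le> (p x - c) * x)"

text \<open>The RS-game. qS S i = q_i^S, qc i = q_i^c. A coalition T \<subseteq> {0..n} is either
  S (0 \<notin> T) or S_0 = S \<union> {0}.\<close>
definition rs_game :: "real \<Rightarrow> (real \<Rightarrow> real) \<Rightarrow> (nat \<Rightarrow> real \<Rightarrow> real) \<Rightarrow>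
    (nat set \<Rightarrow> nat \<Rightarrow> real) \<Rightarrow> (nat \<Rightarrow> real) \<Rightarrow> nat set \<Rightarrow> real" where
  "rs_game c w P qS qc T =
     (if 0 \<in> T then (\<Sum>i\<in>T - {0}. ret_profit P i (qc i) c)
      else (\<Sum>i\<in>T. ret_profit P i (qS T i) (w (\<Sum>j\<in>T. qS T j))))"

definition core :: "nat set \<Rightarrow> (nat set \<Rightarrow> real) \<Rightarrow> (nat \<Rightarrow> real) set" where
  "core N0 v = {x. (\<Sum>i\<in>N0. x i) = v N0 \<and> (\<forall>T. T \<subset> N0 \<longrightarrow> (\<Sum>i\<in>T. x i) \<ge> v T)}"

definition rs_beta :: "nat \<Rightarrow> (nat set \<Rightarrow> real) \<Rightarrow> real" where
  "rs_beta n v = Min {(v (insert 0 S) - v S) / real (card S) | S. S \<subseteq> {1..n} \<and> S \<noteq> {}}"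

definition rs_xi :: "nat \<Rightarrow> (nat set \<Rightarrow> real) \<Rightarrow> nat \<Rightarrow> real" where
  "rs_xi n v i = (if i = 0 then real n * rs_beta n v else v {0, i} - rs_beta n v)"

end

theory Submission
  imports Defs "HOL-Analysis.Analysis"
begin

lemma pos_single:
  assumes "rs_problem c w p" "single_optimal c p x"
  shows "(p x - c) * x > 0"
proof -
  have w0: "w 0 > c" using assms(1) unfolding rs_problem_def by auto
  have p0: "p 0 > c" using assms(1) w0 unfolding rs_problem_def by auto
  have cont: "continuous_on {0..} p" using assms(1) unfolding rs_problem_def by auto
  obtain d where d: "d > 0" "\<forall>y\<in>{0..}. dist y 0 < d \<longrightarrow> dist (p y) (p 0) < p 0 - c"
  proof -
    have "p 0 - c > 0" using p0 by simp
    moreover have "(0::real) \<in> {0..}" by simp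
    ultimately show ?thesis using cont[unfolded continuous_on_iff] that by blast
  qed
  hence "dist (p (d/2)) (p 0) < p 0 - c" by auto
  hence py: "p (d/2) > c" by (auto simp: dist_real_def)
  have "(p (d/2) - c) * (d/2) > 0" using py d by auto
  also have "(p (d/2) - c) * (d/2) \<le> (p x - c) * x"
  proof -
    have "\<forall>y\<ge>0. c \<le> p y \<longrightarrow> (p y - c) * y \<le> (p x - c) * x" using assms(2) unfolding single_optimal_def by blast
    moreover have "(0::real) \<le> d/2" using d by simp
    ultimately show ?thesis using py by (meson less_imp_le)
  qed
  finally show ?thesis .
qed

theorem lemma6p2:
  fixes n :: nat and c :: real and w :: "real \<Rightarrow> real" and P :: "nat \<Rightarrow> real \<Rightarrow> real"
    and qS :: "nat set \<Rightarrow> nat \<Rightarrow> real" and qc :: "nat \<Rightarrow> real"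
  assumes "n \<ge> 1"
    and "rs_situation n c w P"
    and "\<And>S. S \<subseteq> {1..n} \<Longrightarrow> S \<noteq> {} \<Longrightarrow> coal_optimal w P S (qS S)"
    and "\<And>i. i \<in> {1..n} \<Longrightarrow> single_optimal c (P i) (qc i)"
  shows "rs_xi n (rs_game c w P qS qc) \<in> core {0..n} (rs_game c w P qS qc)
       \<and> rs_xi n (rs_game c w P qS qc) 0 > 0"
proof -
  define v where "v = rs_game c w P qS qc"
  define g where "g i = ret_profit P i (qc i) c" for i
  have gpos: "g i > 0" if "i \<in> {1..n}" for i
    using pos_single[of c w "P i" "qc i"] assms(2,4) that
    unfolding g_def ret_profit_def rs_situation_def by auto
  have v0: "v (insert 0 S) = (\<Sum>i\<in>S. g i)" if "S \<subseteq> {1..n}" for S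
  proof -
    have "0 \<notin> S" using that by auto
    hence "insert 0 S - {0} = S" by auto
    thus ?thesis unfolding v_def rs_game_def g_def by simp
  qed
  have vpair: "v {0, i} = g i" if "i \<in> {1..n}" for i
    using v0[of "{i}"] that by auto
  have vS: "v S = (\<Sum>i\<in>S. (P i (qS S i) - w (\<Sum>j\<in>S. qS S j)) * qS S i)" if "0 \<notin> S" for S
    using that unfolding v_def rs_game_def ret_profit_def by simp
  have gap: "v S < v (insert 0 S)" if S: "S \<subseteq> {1..n}" "S \<noteq> {}" for S
  proof -
    define W where "W = w (\<Sum>j\<in>S. qS S j)"
    have fin: "finite S" using S finite_subset by blast
    have feas: "coal_feasible w P S (qS S)" using assms(3)[OF S] unfolding coal_optimal_def by auto
    have Wc: "W > c"
    proof -
      have "0 \<le> (\<Sum>j\<in>S. qS S j)" using feas unfolding coal_feasible_def by (simp add: sum_nonneg)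
      thus ?thesis using assms(2) S unfolding W_def rs_situation_def rs_problem_def
        by (metis all_not_in_conv subsetD)
    qed
    have le: "(P i (qS S i) - W) * qS S i \<le> g i" if i: "i \<in> S" for i
    proof -
      have q0: "qS S i \<ge> 0" and pW: "P i (qS S i) \<ge> W"
        using feas i unfolding coal_feasible_def W_def by auto
      have "(P i (qS S i) - W) * qS S i \<le> (P i (qS S i) - c) * qS S i"
        using q0 Wc by (simp add: mult_right_mono)
      also have "\<dots> \<le> g i" using assms(4)[of i] i S q0 pW Wc
        unfolding single_optimal_def g_def ret_profit_def by fastforce
      finally show ?thesis .
    qed
    obtain i where i: "i \<in> S" using S by auto
    have lt: "(P i (qS S i) - W) * qS S i < g i"
    proof (cases "qS S i > 0")
      case True
      have pW: "P i (qS S i) \<ge> W" using feas i unfolding coal_feasible_def W_def by auto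
      have "(P i (qS S i) - W) * qS S i < (P i (qS S i) - c) * qS S i"
        using True Wc by (simp add: mult_strict_right_mono)
      also have "\<dots> \<le> g i" using assms(4)[of i] i S True pW Wc
        unfolding single_optimal_def g_def ret_profit_def by fastforce
      finally show ?thesis .
    next
      case False
      hence "qS S i = 0" using feas i unfolding coal_feasible_def by force
      thus ?thesis using gpos[of i] i S by auto
    qed
    have "0 \<notin> S" using S by auto
    hence "v S = (\<Sum>i\<in>S. (P i (qS S i) - W) * qS S i)" using vS[of S] unfolding W_def by auto
    also have "\<dots> < (\<Sum>i\<in>S. g i)"
      using sum_strict_mono_ex1[OF fin, of "\<lambda>i. (P i (qS S i) - W) * qS S i" g] le lt i by blast
    also have "\<dots> = v (insert 0 S)" using v0 S by simp
    finally show ?thesis .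
  qed
  define A where "A = {(v (insert 0 S) - v S) / real (card S) | S. S \<subseteq> {1..n} \<and> S \<noteq> {}}"
  have Aim: "A = (\<lambda>S. (v (insert 0 S) - v S) / real (card S)) ` {S. S \<subseteq> {1..n} \<and> S \<noteq> {}}"
    unfolding A_def by auto
  have finA: "finite A" unfolding Aim by simp
  have neA: "A \<noteq> {}" unfolding A_def using assms(1) by (auto intro!: exI[of _ "{1}"])
  have beta: "rs_beta n v = Min A" unfolding rs_beta_def A_def by simp
  have bpos: "rs_beta n v > 0"
    unfolding beta Min_gr_iff[OF finA neA]
  proof
    fix a assume "a \<in> A"
    then obtain S where S: "S \<subseteq> {1..n}" "S \<noteq> {}" and a: "a = (v (insert 0 S) - v S) / real (card S)"
      unfolding A_def by auto
    have "card S > 0" using S finite_subset by (metis card_gt_0_iff finite_atLeastAtMost)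
    thus "0 < a" using gap[OF S] a by simp
  qed
  have ble: "rs_beta n v * real (card S) \<le> v (insert 0 S) - v S" if S: "S \<subseteq> {1..n}" "S \<noteq> {}" for S
  proof -
    have "rs_beta n v \<le> (v (insert 0 S) - v S) / real (card S)"
      unfolding beta using finA by (rule Min_le) (use S in \<open>auto simp: A_def\<close>)
    moreover have "card S > 0" using S finite_subset by (metis card_gt_0_iff finite_atLeastAtMost)
    ultimately show ?thesis by (simp add: pos_le_divide_eq)
  qed
  let ?x = "rs_xi n v"
  have sumS: "(\<Sum>i\<in>S. ?x i) = (\<Sum>i\<in>S. g i) - real (card S) * rs_beta n v"
    if "S \<subseteq> {1..n}" for S
  proof -
    have "(\<Sum>i\<in>S. ?x i) = (\<Sum>i\<in>S. g i - rs_beta n v)"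
      using that by (intro sum.cong) (auto simp: rs_xi_def vpair)
    thus ?thesis by (simp add: sum_subtractf)
  qed
  have sum0S: "(\<Sum>i\<in>insert 0 S. ?x i) = (\<Sum>i\<in>S. g i) + (real n - real (card S)) * rs_beta n v" if "S \<subseteq> {1..n}" for S
  proof -
    have "0 \<notin> S" "finite S" using that finite_subset by auto
    thus ?thesis using sumS[OF that] by (simp add: rs_xi_def algebra_simps)
  qed
  have N0: "{0..n} = insert 0 {1..n}" by auto
  have eff: "(\<Sum>i\<in>{0..n}. ?x i) = v {0..n}"
    unfolding N0 using sum0S[of "{1..n}"] v0[of "{1..n}"] by simp
  have stab: "(\<Sum>i\<in>T. ?x i) \<ge> v T" if "T \<subset> {0..n}" for T
  proof -
    define S where "S = T - {0}"
    have S: "S \<subseteq> {1..n}" using that unfolding S_def by auto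
    show ?thesis
    proof (cases "0 \<in> T")
      case True
      hence T: "T = insert 0 S" unfolding S_def by auto
      have "card S \<le> card {1..n}" using S by (intro card_mono) auto
      hence "real (card S) \<le> real n" by simp
      hence "0 \<le> (real n - real (card S)) * rs_beta n v" using bpos by simp
      thus ?thesis unfolding T using sum0S[OF S] v0[OF S] by simp
    next
      case False
      hence T: "T = S" unfolding S_def by auto
      show ?thesis
      proof (cases "S = {}")
        case True
        thus ?thesis unfolding T v_def rs_game_def by simp
      next
        case False
        show ?thesis unfolding T using sumS[OF S] ble[OF S False] v0[OF S]
          by (simp add: algebra_simps)
      qed
    qed
  qed
  have "?x \<in> core {0..n} v" unfolding core_def using eff stab by auto
  moreover have "?x 0 > 0" using bpos assms(1) by (simp add: rs_xi_def)
  ultimately show ?thesis unfolding v_def by simp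
qed

end
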